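(* Let $p,q,r\in[1,\infty)$ with $1/r=1/p+1/q$, let $\alpha>0$, $\phi(s)\equiv s^\alpha$, $\omega_1(t)\equiv t^{-n/p}$, $\omega_2(t)\equiv t^{-n/q}$, $\omega(t)\equiv t^{-n/r}$, and suppose every set $B\in\mathcal B$ is bounded in $X$. If $F_1\in e-(\mathcal B,\phi,\omega_1)-B^{p}(\Lambda\times X:\mathbb C)$ and $F_2\in e-(\mathcal B,\phi,\omega_2)-B^{q}(\Lambda\times X:Y)$, then the function $F(\mathbf t;x):=F_1(\mathbf t;x)F_2(\mathbf t;x)$, $\mathbf t\in\Lambda$, $x\in X$, belongs to $e-(\mathcal B,\phi,\omega)-B^{r}(\Lambda\times X:Y)$.
   Context: $X,Y$ are complex Banach spaces, $n\in\mathbb N$, $\emptyset\ne\Lambda\subseteq\mathbb R^n$ is Lebesgue measurable, $\mathcal B$ is a nonempty collection of nonempty subsets of $X$ whose union is $X$. For $t>0$, $\Lambda_t:=\Lambda\cap[-t,t]^n$. A trigonometric polynomial is a finite sum $P(\mathbf t;x)=\sum_{l}e^{i\langle\lambda_l,\mathbf t\rangle}c_l(x)$ with $\lambda_l\in\mathbb R^n$ and $c_l:X\to Z$ ($Z$ the target space) continuous and bounded on bounded subsets of $X$. For a constant exponent $s\in[1,\infty)$, $\phi:[0,\infty)\to[0,\infty)$ and $\omega:(0,\infty)\to(0,\infty)$, a function $F:\Lambda\times X\to Z$ (each $F(\cdot;x)$ measurable) belongs to $e-(\mathcal B,\phi,\omega)-B^{s}(\Lambda\times X:Z)$ iff for each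 $B\in\mathcal B$ there is a sequence $(P_k)$ of trigonometric polynomials with $\lim_{k\to\infty}\limsup_{t\to\infty}\omega(t)\sup_{x\in B}\|\phi(\|F(\cdot;x)-P_k(\cdot;x)\|_Z)\|_{L^{s}(\Lambda_t)}=0$. *)

theory Defs
  imports "HOL-Analysis.Analysis"
begin

text \<open>Complex Banach spaces are the instances that are also of class banach.\<close>

class complex_normed_vector = real_normed_vector +
  fixes scaleC :: "complex \<Rightarrow> 'a \<Rightarrow> 'a"
  assumes scaleC_add_right: "scaleC a (x + y) = scaleC a x + scaleC a y"
    and scaleC_add_left: "scaleC (a + b) x = scaleC a x + scaleC b x"
    and scaleC_scaleC: "scaleC a (scaleC b x) = scaleC (a * b) x"
    and scaleC_one: "scaleC 1 x = x"
    and scaleC_of_real: "scaleC (of_real r) x = scaleR r x"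
    and norm_scaleC: "norm (scaleC a x) = cmod a * norm x"

instantiation complex :: complex_normed_vector
begin
definition scaleC_complex :: "complex \<Rightarrow> complex \<Rightarrow> complex" where
  "scaleC_complex a x = a * x"
instance
  by standard (auto simp: scaleC_complex_def algebra_simps norm_mult scaleR_conv_of_real)
end

definition trig_poly ::
  "(real^'n \<Rightarrow> 'x::real_normed_vector \<Rightarrow> 'z::complex_normed_vector) \<Rightarrow> bool" where
  "trig_poly P \<longleftrightarrow>
     (\<exists>L :: ((real^'n) \<times> ('x \<Rightarrow> 'z)) list.
        (\<forall>(lam, c) \<in> set L. continuous_on UNIV c \<and> (\<forall>B. bounded B \<longrightarrow> bounded (c ` B))) \<and>
        P = (\<lambda>t x. (\<Sum>(lam, c) \<leftarrow> L. scaleC (exp (\<i> * complex_of_real (lam \<bullet> t))) (c x))))"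

definition Lambda_t :: "(real^'n) set \<Rightarrow> real \<Rightarrow> (real^'n) set" where
  "Lambda_t Lam t = Lam \<inter> {v. \<forall>i. \<bar>v $ i\<bar> \<le> t}"

definition Lnorm :: "real \<Rightarrow> (real^'n) set \<Rightarrow> (real^'n \<Rightarrow> real) \<Rightarrow> ennreal" where
  "Lnorm s A g =
     (let I = (\<integral>\<^sup>+ v \<in> A. ennreal (\<bar>g v\<bar> powr s) \<partial>lebesgue)
      in if I = \<infinity> then \<infinity> else ennreal (enn2real I powr (1 / s)))"

definition e_Besicovitch ::
  "'x::real_normed_vector set set \<Rightarrow> (real \<Rightarrow> real) \<Rightarrow> (real \<Rightarrow> real) \<Rightarrow> real \<Rightarrow>
   (real^'n) set \<Rightarrow> (real^'n \<Rightarrow> 'x \<Rightarrow> 'z::complex_normed_vector) \<Rightarrow> bool" where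
  "e_Besicovitch BB phi omega s Lam F \<longleftrightarrow>
     (\<forall>x. (\<lambda>t. F t x) \<in> borel_measurable (lebesgue_on Lam)) \<and>
     (\<forall>B \<in> BB. \<exists>P :: nat \<Rightarrow> real^'n \<Rightarrow> 'x \<Rightarrow> 'z.
        (\<forall>k. trig_poly (P k)) \<and>
        (\<lambda>k. Limsup at_top (\<lambda>t::real. ennreal (omega t) *
               (SUP x \<in> B. Lnorm s (Lambda_t Lam t) (\<lambda>v. phi (norm (F v x - P k v x))))))
          \<longlonglongrightarrow> 0)"

end

theory Submission
  imports Defs
begin


lemma scaleC_zero_right[simp]: "scaleC a (0::'a::complex_normed_vector) = 0"
proof -
  have "scaleC a (0::'a) = scaleC a 0 + scaleC a 0" by (metis add.right_neutral scaleC_add_right)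
  then show ?thesis by simp
qed

lemma scaleC_zero_left[simp]: "scaleC 0 (x::'a::complex_normed_vector) = 0"
proof -
  have "scaleC 0 (x::'a) = scaleC 0 x + scaleC 0 x" by (metis add.right_neutral scaleC_add_left)
  then show ?thesis by simp
qed

lemma scaleC_minus_right: "scaleC a (- x::'a::complex_normed_vector) = - scaleC a x"
  by (metis add.right_inverse add_eq_0_iff scaleC_add_right scaleC_zero_right)

lemma scaleC_diff_right: "scaleC a (x - y::'a::complex_normed_vector) = scaleC a x - scaleC a y"
  by (metis diff_conv_add_uminus scaleC_add_right scaleC_minus_right)

lemma scaleC_minus_left: "scaleC (- a) (x::'a::complex_normed_vector) = - scaleC a x"
  by (metis add.right_inverse add_eq_0_iff scaleC_add_left scaleC_zero_left)

lemma scaleC_diff_left: "scaleC (a - b) (x::'a::complex_normed_vector) = scaleC a x - scaleC b x"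
  by (metis diff_conv_add_uminus scaleC_add_left scaleC_minus_left)

lemma scaleC_sum_list_right:
  "scaleC a (sum_list (map f L)) = sum_list (map (\<lambda>l. scaleC a (f l :: 'a::complex_normed_vector)) L)"
  by (induction L) (auto simp: scaleC_add_right)

lemma bounded_bilinear_scaleC: "bounded_bilinear (scaleC :: complex \<Rightarrow> 'a::complex_normed_vector \<Rightarrow> 'a)"
proof
  fix a a' :: complex and b b' :: 'a and r :: real
  show "scaleC (a + a') b = scaleC a b + scaleC a' b" by (rule scaleC_add_left)
  show "scaleC a (b + b') = scaleC a b + scaleC a b'" by (rule scaleC_add_right)
  show "scaleC (r *\<^sub>R a) b = r *\<^sub>R scaleC a b"
    by (simp add: scaleR_conv_of_real scaleC_scaleC[symmetric] scaleC_of_real)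
  show "scaleC a (r *\<^sub>R b) = r *\<^sub>R scaleC a b"
    by (metis mult.commute scaleC_of_real scaleC_scaleC)
next
  show "\<exists>K. \<forall>a b. norm (scaleC a (b::'a)) \<le> norm a * norm b * K"
    by (rule exI[of _ 1]) (simp add: norm_scaleC)
qed

lemma measurable_pair_complex:
  fixes f :: "'m \<Rightarrow> complex" and g :: "'m \<Rightarrow> 'b::topological_space"
    and H :: "complex \<Rightarrow> 'b \<Rightarrow> 'c::topological_space"
  assumes f: "f \<in> borel_measurable M" and g: "g \<in> borel_measurable M"
    and H: "continuous_on UNIV (\<lambda>z. H (fst z) (snd z))"
  shows "(\<lambda>x. H (f x) (g x)) \<in> borel_measurable M"
proof (rule borel_measurableI)
  fix S :: "'c set" assume "open S"
  define W where "W = (\<lambda>z. H (fst z) (snd z)) -` S"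
  have oW: "open W" unfolding W_def using H \<open>open S\<close>
    by (simp add: continuous_on_open_vimage)
  obtain \<B> :: "complex set set" where cB: "countable \<B>" and oB: "\<And>C. C \<in> \<B> \<Longrightarrow> open C"
    and bB: "\<And>S. open S \<Longrightarrow> \<exists>U. U \<subseteq> \<B> \<and> S = \<Union>U"
    by (rule univ_second_countable) blast
  define V where "V = (\<lambda>U. \<Union>{V. open V \<and> U \<times> V \<subseteq> W})"
  have oV: "open (V U)" for U unfolding V_def by auto
  have WU: "W = (\<Union>U\<in>\<B>. U \<times> V U)"
  proof
    show "W \<subseteq> (\<Union>U\<in>\<B>. U \<times> V U)"
    proof
      fix z assume "z \<in> W"
      then obtain A B where AB: "open A" "open B" "z \<in> A \<times> B" "A \<times> B \<subseteq> W"
        using oW open_prod_elim by metis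
      obtain U where "U \<subseteq> \<B>" "A = \<Union>U" using bB[OF \<open>open A\<close>] by blast
      moreover obtain C where "C \<in> U" "fst z \<in> C" using AB(3) \<open>A = \<Union>U\<close> by (auto simp: mem_Times_iff)
      ultimately have C: "C \<in> \<B>" "fst z \<in> C" "C \<subseteq> A" by auto
      have "B \<subseteq> V C" unfolding V_def using AB C by blast
      then show "z \<in> (\<Union>U\<in>\<B>. U \<times> V U)" using C AB(3) by (auto intro!: bexI[of _ C] simp: mem_Times_iff)
    qed
    show "(\<Union>U\<in>\<B>. U \<times> V U) \<subseteq> W" unfolding V_def by auto
  qed
  have "(\<lambda>x. H (f x) (g x)) -` S \<inter> space M = (\<Union>U\<in>\<B>. (f -` U \<inter> space M) \<inter> (g -` V U \<inter> space M))"
    using WU unfolding W_def by (auto simp: set_eq_iff)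
  also have "\<dots> \<in> sets M"
    using cB oB oV f g by (intro sets.countable_UN' sets.Int) (auto intro: measurable_sets_borel)
  finally show "(\<lambda>x. H (f x) (g x)) -` S \<inter> space M \<in> sets M" .
qed



lemma scaleC_sum_list_left:
  "scaleC (sum_list (map f L)) (y :: 'a::complex_normed_vector) = sum_list (map (\<lambda>l. scaleC (f l) y) L)"
  by (induction L) (auto simp: scaleC_add_left)

lemma continuous_on_scaleC[continuous_intros]:
  "continuous_on S f \<Longrightarrow> continuous_on S g \<Longrightarrow> continuous_on S (\<lambda>x. scaleC (f x) (g x :: 'a::complex_normed_vector))"
  by (rule bounded_bilinear.continuous_on[OF bounded_bilinear_scaleC])

lemma trig_sum_continuous:
  fixes L :: "((real^'n) \<times> ('x::real_normed_vector \<Rightarrow> 'z::complex_normed_vector)) list"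
  shows "continuous_on UNIV (\<lambda>t. (\<Sum>(lam, c) \<leftarrow> L. scaleC (exp (\<i> * complex_of_real (lam \<bullet> t))) (c x)))"
proof (induction L)
  case Nil then show ?case by simp
next
  case (Cons a L)
  obtain lam c where a: "a = (lam, c)" by fastforce
  show ?case unfolding a using Cons
    by (simp, intro continuous_intros) (auto intro: continuous_on_const)
qed

lemma trig_poly_continuous:
  "trig_poly P \<Longrightarrow> continuous_on UNIV (\<lambda>t. P t x)"
  unfolding trig_poly_def using trig_sum_continuous by blast

lemma trig_sum_bounded:
  fixes L :: "((real^'n) \<times> ('x::real_normed_vector \<Rightarrow> 'z::complex_normed_vector)) list"
  assumes "\<forall>(lam, c) \<in> set L. (\<forall>B. bounded B \<longrightarrow> bounded (c ` B))" and "bounded B"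
  shows "\<exists>M. \<forall>t. \<forall>x\<in>B. norm (\<Sum>(lam, c) \<leftarrow> L. scaleC (exp (\<i> * complex_of_real (lam \<bullet> t))) (c x)) \<le> M"
  using assms(1)
proof (induction L)
  case Nil then show ?case by (auto intro!: exI[of _ 0])
next
  case (Cons a L)
  obtain lam c where a: "a = (lam, c)" by fastforce
  from Cons obtain M where M: "\<forall>t. \<forall>x\<in>B. norm (\<Sum>(lam, c) \<leftarrow> L. scaleC (exp (\<i> * complex_of_real (lam \<bullet> t))) (c x)) \<le> M"
    by auto
  have "bounded (c ` B)" using Cons.prems assms(2) a by auto
  then obtain K where K: "\<forall>x\<in>B. norm (c x) \<le> K" unfolding bounded_iff by auto
  have "norm (scaleC (exp (\<i> * complex_of_real (lam \<bullet> t))) (c x) + (\<Sum>(lam, c) \<leftarrow> L. scaleC (exp (\<i> * complex_of_real (lam \<bullet> t))) (c x))) \<le> K + M"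
    if "x \<in> B" for t x
  proof -
    have e: "cmod (exp (\<i> * complex_of_real (lam \<bullet> t))) = 1"
      by (metis mult.commute norm_exp_i_times)
    show ?thesis
      by (rule order_trans[OF norm_triangle_ineq]) (use K M that e in \<open>auto simp: norm_scaleC intro!: add_mono\<close>)
  qed
  then show ?case unfolding a by (intro exI[of _ "K+M"]) (simp only: list.map sum_list.Cons prod.case, blast)
qed

lemma trig_poly_bounded:
  assumes "trig_poly P" "bounded B" shows "\<exists>M. \<forall>t. \<forall>x\<in>B. norm (P t x) \<le> M"
proof -
  obtain L :: "((real^'a) \<times> ('b \<Rightarrow> 'c)) list" where L: "\<forall>(lam, c) \<in> set L. continuous_on UNIV c \<and> (\<forall>B. bounded B \<longrightarrow> bounded (c ` B))"
    and P: "P = (\<lambda>t x. (\<Sum>(lam, c) \<leftarrow> L. scaleC (exp (\<i> * complex_of_real (lam \<bullet> t))) (c x)))"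
    using assms(1) unfolding trig_poly_def by blast
  have "\<forall>(lam, c) \<in> set L. (\<forall>B. bounded B \<longrightarrow> bounded (c ` B))" using L by auto
  from trig_sum_bounded[OF this assms(2)] show ?thesis unfolding P .
qed



lemma sum_list_concat': "sum_list (concat xss) = sum_list (map sum_list (xss :: 'a::monoid_add list list))"
  by (induction xss) auto

lemma trig_term_mult:
  fixes l1 l2 :: "real^'n" and c1 :: complex and d :: "'y::complex_normed_vector"
  shows "scaleC (scaleC (exp (\<i> * complex_of_real (l1 \<bullet> t))) c1) (scaleC (exp (\<i> * complex_of_real (l2 \<bullet> t))) d)
    = scaleC (exp (\<i> * complex_of_real ((l1 + l2) \<bullet> t))) (scaleC c1 d)"
proof -
  have e: "exp (\<i> * complex_of_real ((l1 + l2) \<bullet> t)) = exp (\<i> * complex_of_real (l1 \<bullet> t)) * exp (\<i> * complex_of_real (l2 \<bullet> t))"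
    by (simp add: inner_add_left distrib_left exp_add)
  show ?thesis unfolding e by (simp add: scaleC_complex_def scaleC_scaleC mult_ac)
qed

lemma trig_poly_mult:
  fixes P1 :: "real^'n \<Rightarrow> 'x::real_normed_vector \<Rightarrow> complex"
    and P2 :: "real^'n \<Rightarrow> 'x \<Rightarrow> 'y::complex_normed_vector"
  assumes "trig_poly P1" "trig_poly P2"
  shows "trig_poly (\<lambda>t x. scaleC (P1 t x) (P2 t x))"
proof -
  obtain L1 :: "((real^'n) \<times> ('x \<Rightarrow> complex)) list" where L1: "\<forall>(lam, c) \<in> set L1. continuous_on UNIV c \<and> (\<forall>B. bounded B \<longrightarrow> bounded (c ` B))"
    and P1: "P1 = (\<lambda>t x. (\<Sum>(lam, c) \<leftarrow> L1. scaleC (exp (\<i> * complex_of_real (lam \<bullet> t))) (c x)))"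
    using assms(1) unfolding trig_poly_def by blast
  obtain L2 :: "((real^'n) \<times> ('x \<Rightarrow> 'y)) list" where L2: "\<forall>(lam, c) \<in> set L2. continuous_on UNIV c \<and> (\<forall>B. bounded B \<longrightarrow> bounded (c ` B))"
    and P2: "P2 = (\<lambda>t x. (\<Sum>(lam, c) \<leftarrow> L2. scaleC (exp (\<i> * complex_of_real (lam \<bullet> t))) (c x)))"
    using assms(2) unfolding trig_poly_def by blast
  define g where "g = (\<lambda>(a :: (real^'n) \<times> ('x \<Rightarrow> complex)) (b :: (real^'n) \<times> ('x \<Rightarrow> 'y)).
       (fst a + fst b, \<lambda>x. scaleC (snd a x) (snd b x)))"
  define L where "L = concat (map (\<lambda>a. map (g a) L2) L1)"
  have cond: "continuous_on UNIV c \<and> (\<forall>B. bounded B \<longrightarrow> bounded (c ` B))" if "(lam, c) \<in> set L" for lam c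
  proof -
    have "(lam, c) \<in> (\<Union>a\<in>set L1. g a ` set L2)" using that unfolding L_def by simp
    then obtain a b where ab: "a \<in> set L1" "b \<in> set L2" "(lam, c) = g a b" by blast
    obtain l1 c1 where a: "a = (l1, c1)" by fastforce
    obtain l2 c2 where b: "b = (l2, c2)" by fastforce
    have c: "c = (\<lambda>x. scaleC (c1 x) (c2 x))" using ab(3) unfolding g_def a b by auto
    have h1: "continuous_on UNIV c1" "\<And>B. bounded B \<Longrightarrow> bounded (c1 ` B)" using L1 ab(1) a by auto
    have h2: "continuous_on UNIV c2" "\<And>B. bounded B \<Longrightarrow> bounded (c2 ` B)" using L2 ab(2) b by auto
    have "bounded (c ` B)" if bB: "bounded B" for B
    proof -
      obtain K1 where K1: "\<forall>x\<in>B. norm (c1 x) \<le> K1" using h1(2)[OF bB] unfolding bounded_iff by auto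
      obtain K2 where K2: "\<forall>x\<in>B. norm (c2 x) \<le> K2" using h2(2)[OF bB] unfolding bounded_iff by auto
      have "norm (c x) \<le> K1 * K2" if "x \<in> B" for x
        unfolding c norm_scaleC using K1 K2 that by (auto intro!: mult_mono order_trans[OF norm_ge_zero])
      then show ?thesis unfolding bounded_iff by auto
    qed
    then show ?thesis unfolding c using h1(1) h2(1) by (auto intro: continuous_on_scaleC)
  qed
  have eq: "(\<lambda>t x. scaleC (P1 t x) (P2 t x)) = (\<lambda>t x. (\<Sum>(lam, c) \<leftarrow> L. scaleC (exp (\<i> * complex_of_real (lam \<bullet> t))) (c x)))"
  proof (intro ext)
    fix t x
    show "scaleC (P1 t x) (P2 t x) = (\<Sum>(lam, c) \<leftarrow> L. scaleC (exp (\<i> * complex_of_real (lam \<bullet> t))) (c x))"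
      unfolding P1 P2 L_def map_concat sum_list_concat' scaleC_sum_list_left map_map o_def
      by (simp add: scaleC_sum_list_right g_def case_prod_beta trig_term_mult)
  qed
  show ?thesis unfolding trig_poly_def
    by (rule exI[of _ L]) (use cond eq in auto)
qed



lemma prod_powr_le_max:
  fixes U W p q r :: real
  assumes "U \<ge> 0" "W \<ge> 0" "p > 0" "q > 0" "r > 0" "1 / r = 1 / p + 1 / q"
  shows "(U * W) powr r \<le> max (U powr p) (W powr q)"
proof -
  have key: "(A * B) powr r \<le> A powr a" if "A \<ge> 0" "B \<ge> 0" "a > 0" "b > 0" "1 / r = 1 / a + 1 / b"
    and le: "B powr b \<le> A powr a" for A B a b
  proof (cases "A = 0")
    case True then show ?thesis using \<open>r > 0\<close> by simp
  next
    case False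
    then have A: "A > 0" using that by simp
    have "B = (B powr b) powr (1 / b)" using that by (simp add: powr_powr)
    also have "\<dots> \<le> (A powr a) powr (1 / b)" using le that by (intro powr_mono2) auto
    also have "\<dots> = A powr (a / b)" by (simp add: powr_powr)
    finally have Bl: "B \<le> A powr (a / b)" .
    have "A * B \<le> A * A powr (a / b)" using Bl A by (intro mult_left_mono) auto
    also have "\<dots> = A powr (1 + a / b)" using A by (simp add: powr_add)
    finally have "(A * B) powr r \<le> (A powr (1 + a / b)) powr r"
      using that \<open>r > 0\<close> by (intro powr_mono2) auto
    also have "\<dots> = A powr ((1 + a / b) * r)" by (simp add: powr_powr)
    also have "(1 + a / b) * r = a"
    proof -
      have "(1 + a / b) = a * (1 / a + 1 / b)" using that by (simp add: field_simps)
      also have "\<dots> = a / r" by (simp add: that(5)[symmetric])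
      finally show ?thesis using \<open>r > 0\<close> by simp
    qed
    finally show ?thesis .
  qed
  show ?thesis
  proof (cases "W powr q \<le> U powr p")
    case True
    then show ?thesis using key[of U W p q] assms by auto
  next
    case False
    then have "(W * U) powr r \<le> W powr q" using key[of W U q p] assms by auto
    then show ?thesis by (simp add: mult.commute)
  qed
qed

lemma young_powr:
  fixes X Y p q r l :: real
  assumes "X \<ge> 0" "Y \<ge> 0" "p > 0" "q > 0" "r > 0" "1 / r = 1 / p + 1 / q" "l > 0"
  shows "(X * Y) powr r \<le> l powr (- p) * X powr p + l powr q * Y powr q"
proof -
  have "(X * Y) powr r = ((X / l) * (l * Y)) powr r" using assms by simp
  also have "\<dots> \<le> max ((X / l) powr p) ((l * Y) powr q)"
    using assms by (intro prod_powr_le_max) auto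
  also have "\<dots> \<le> (X / l) powr p + (l * Y) powr q" by simp
  also have "\<dots> = l powr (- p) * X powr p + l powr q * Y powr q"
    using assms by (simp add: powr_divide powr_mult powr_minus divide_inverse mult.commute inverse_powr)
  finally show ?thesis .
qed

lemma max3_powr:
  fixes N x y z a r :: real
  assumes "x \<ge> 0" "y \<ge> 0" "z \<ge> 0" "N \<ge> 0" "N \<le> x + y + z" "a > 0" "r > 0"
  shows "(N powr a) powr r \<le> 3 powr (a * r) * ((x powr a) powr r + (y powr a) powr r + (z powr a) powr r)"
proof -
  define m where "m = max x (max y z)"
  have m0: "m \<ge> 0" using assms unfolding m_def by auto
  have "N \<le> 3 * m" using assms unfolding m_def by linarith
  then have "(N powr a) powr r \<le> ((3 * m) powr a) powr r"
    using assms m0 by (intro powr_mono2 powr_ge_zero) auto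
  also have "\<dots> = 3 powr (a * r) * (m powr a) powr r"
    using m0 by (simp add: powr_mult powr_powr)
  also have "(m powr a) powr r \<le> (x powr a) powr r + (y powr a) powr r + (z powr a) powr r"
  proof -
    have "m = x \<or> m = y \<or> m = z" unfolding m_def by linarith
    then show ?thesis by (auto simp: add_nonneg_nonneg)
  qed
  then have "3 powr (a * r) * (m powr a) powr r \<le> 3 powr (a * r) * ((x powr a) powr r + (y powr a) powr r + (z powr a) powr r)"
    by (intro mult_left_mono) auto
  finally show ?thesis .
qed



lemma nnint_bound4:
  fixes f A B G E :: "'m \<Rightarrow> real"
  assumes mA: "A \<in> borel_measurable M" and mB: "B \<in> borel_measurable M"
    and mG: "G \<in> borel_measurable M" and mE: "E \<in> borel_measurable M"
    and nn: "\<And>v. v \<in> space M \<Longrightarrow> A v \<ge> 0 \<and> B v \<ge> 0 \<and> G v \<ge> 0 \<and> E v \<ge> 0"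
    and c: "K \<ge> 0" "c1 \<ge> 0" "c2 \<ge> 0" "c3 \<ge> 0" "c4 \<ge> 0"
    and le: "\<And>v. v \<in> space M \<Longrightarrow> f v \<le> K * (c1 * A v + c2 * B v + c3 * G v + c4 * E v)"
  shows "(\<integral>\<^sup>+ v. ennreal (f v) \<partial>M) \<le> ennreal K * (ennreal c1 * (\<integral>\<^sup>+ v. ennreal (A v) \<partial>M)
      + ennreal c2 * (\<integral>\<^sup>+ v. ennreal (B v) \<partial>M) + ennreal c3 * (\<integral>\<^sup>+ v. ennreal (G v) \<partial>M)
      + ennreal c4 * (\<integral>\<^sup>+ v. ennreal (E v) \<partial>M))"
proof -
  have "(\<integral>\<^sup>+ v. ennreal (f v) \<partial>M) \<le> (\<integral>\<^sup>+ v. ennreal K * (ennreal c1 * ennreal (A v) + ennreal c2 * ennreal (B v)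
      + ennreal c3 * ennreal (G v) + ennreal c4 * ennreal (E v)) \<partial>M)"
  proof (rule nn_integral_mono)
    fix v assume v: "v \<in> space M"
    have "ennreal (f v) \<le> ennreal (K * (c1 * A v + c2 * B v + c3 * G v + c4 * E v))"
      using le[OF v] by (rule ennreal_leI)
    also have "\<dots> = ennreal K * (ennreal c1 * ennreal (A v) + ennreal c2 * ennreal (B v)
      + ennreal c3 * ennreal (G v) + ennreal c4 * ennreal (E v))"
      using nn[OF v] c by (simp add: ennreal_mult ennreal_plus add_nonneg_nonneg)
    finally show "ennreal (f v) \<le> \<dots>" .
  qed
  also have "\<dots> = ennreal K * (ennreal c1 * (\<integral>\<^sup>+ v. ennreal (A v) \<partial>M)
      + ennreal c2 * (\<integral>\<^sup>+ v. ennreal (B v) \<partial>M) + ennreal c3 * (\<integral>\<^sup>+ v. ennreal (G v) \<partial>M)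
      + ennreal c4 * (\<integral>\<^sup>+ v. ennreal (E v) \<partial>M))"
    using mA mB mG mE by (simp add: nn_integral_cmult nn_integral_add)
  finally show ?thesis .
qed

lemma nnint_bound2:
  fixes f A :: "'m \<Rightarrow> real"
  assumes mA: "A \<in> borel_measurable M"
    and nn: "\<And>v. v \<in> space M \<Longrightarrow> A v \<ge> 0"
    and c: "K \<ge> 0" "c \<ge> 0"
    and le: "\<And>v. v \<in> space M \<Longrightarrow> f v \<le> K * (A v + c)"
  shows "(\<integral>\<^sup>+ v. ennreal (f v) \<partial>M) \<le> ennreal K * ((\<integral>\<^sup>+ v. ennreal (A v) \<partial>M) + ennreal c * emeasure M (space M))"
proof -
  have "(\<integral>\<^sup>+ v. ennreal (f v) \<partial>M) \<le> (\<integral>\<^sup>+ v. ennreal K * (ennreal (A v) + ennreal c) \<partial>M)"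
  proof (rule nn_integral_mono)
    fix v assume v: "v \<in> space M"
    have "ennreal (f v) \<le> ennreal (K * (A v + c))"
      using le[OF v] by (rule ennreal_leI)
    also have "\<dots> = ennreal K * (ennreal (A v) + ennreal c)"
      using nn[OF v] c by (simp add: ennreal_mult ennreal_plus)
    finally show "ennreal (f v) \<le> \<dots>" .
  qed
  also have "\<dots> = ennreal K * ((\<integral>\<^sup>+ v. ennreal (A v) \<partial>M) + ennreal c * emeasure M (space M))"
    using mA by (simp add: nn_integral_cmult nn_integral_add)
  finally show ?thesis .
qed



lemma Lambda_t_sub: "Lambda_t Lam t \<subseteq> cbox (\<chi> i. - t) (\<chi> i. t)"
  unfolding Lambda_t_def by (auto simp: mem_box_cart abs_le_iff) (metis minus_le_iff)

lemma Lambda_t_sets: "Lam \<in> sets lebesgue \<Longrightarrow> Lambda_t Lam t \<in> sets lebesgue"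
proof -
  assume L: "Lam \<in> sets lebesgue"
  have "Lambda_t Lam t = Lam \<inter> cbox (\<chi> i. - t) (\<chi> i. t)"
    unfolding Lambda_t_def by (auto simp: mem_box_cart abs_le_iff) (metis minus_le_iff)+
  then show ?thesis using L by auto
qed

lemma emeasure_Lambda_t:
  fixes Lam :: "(real^'n) set"
  assumes "t \<ge> 0"
  shows "emeasure lebesgue (Lambda_t Lam t) \<le> ennreal ((2 * t) ^ CARD('n))"
proof -
  have "emeasure lebesgue (Lambda_t Lam t) \<le> emeasure lebesgue (cbox (\<chi> i. - t) (\<chi> i. t) :: (real^'n) set)"
    by (intro emeasure_mono Lambda_t_sub) auto
  also have "\<dots> = emeasure lborel (cbox (\<chi> i. - t) (\<chi> i. t) :: (real^'n) set)"
    by simp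
  also have "\<dots> = ennreal ((2 * t) ^ CARD('n))"
  proof -
    have ne: "cbox (\<chi> i. - t) (\<chi> i. t) \<noteq> ({} :: (real^'n) set)"
      using assms by (auto simp: interval_ne_empty_cart) 
    have "emeasure lborel (cbox (\<chi> i. - t) (\<chi> i. t) :: (real^'n) set) = ennreal (measure lborel (cbox (\<chi> i. - t) (\<chi> i. t) :: (real^'n) set))"
      using emeasure_lborel_cbox_finite[of "(\<chi> i. - t) :: real^'n" "\<chi> i. t"] by (intro emeasure_eq_ennreal_measure) auto
    also have "measure lborel (cbox (\<chi> i. - t) (\<chi> i. t) :: (real^'n) set) = (2 * t) ^ CARD('n)"
      using content_cbox_cart[OF ne] by simp
    finally show ?thesis .
  qed
  finally show ?thesis .
qed



lemma Lnorm_lt: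
  fixes n s t d :: real
  assumes t: "t > 0" and s: "s > 0" and d: "d > 0"
    and lt: "ennreal (t powr (- n / s)) * Lnorm s S g < ennreal d"
  shows "ennreal (t powr (- n)) * (\<integral>\<^sup>+ v \<in> S. ennreal (\<bar>g v\<bar> powr s) \<partial>lebesgue) < ennreal (d powr s)"
proof -
  define I where "I = (\<integral>\<^sup>+ v \<in> S. ennreal (\<bar>g v\<bar> powr s) \<partial>lebesgue)"
  have LI: "Lnorm s S g = (if I = \<infinity> then \<infinity> else ennreal (enn2real I powr (1 / s)))"
    unfolding Lnorm_def I_def Let_def by simp
  have w: "t powr (- n / s) > 0" using t by simp
  show ?thesis
  proof (cases "I = \<infinity>")
    case True
    then have "ennreal (t powr (- n / s)) * Lnorm s S g = \<infinity>" using LI w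
      by (simp add: ennreal_mult_eq_top_iff)
    then show ?thesis using lt by simp
  next
    case False
    define J where "J = enn2real I"
    have J0: "J \<ge> 0" unfolding J_def by simp
    have IJ: "I = ennreal J" unfolding J_def using False by (simp add: less_top)
    have "ennreal (t powr (- n / s) * J powr (1 / s)) < ennreal d"
      using lt LI False w unfolding J_def by (simp add: ennreal_mult)
    then have "t powr (- n / s) * J powr (1 / s) < d" using d by (simp add: ennreal_less_iff)
    then have "(t powr (- n / s) * J powr (1 / s)) powr s < d powr s"
      using s w J0 by (intro powr_less_mono2) auto
    also have "(t powr (- n / s) * J powr (1 / s)) powr s = t powr (- n) * J"
      using s t J0 by (simp add: powr_mult powr_powr)
    finally have "t powr (- n) * J < d powr s" .
    then show ?thesis unfolding I_def[symmetric] IJ using t J0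
      by (simp add: ennreal_mult[symmetric] ennreal_less_iff)
  qed
qed

lemma Lnorm_le:
  fixes n s t e :: real
  assumes t: "t > 0" and s: "s > 0" and e: "e \<ge> 0"
    and le: "ennreal (t powr (- n)) * (\<integral>\<^sup>+ v \<in> S. ennreal (\<bar>g v\<bar> powr s) \<partial>lebesgue) \<le> ennreal (e powr s)"
  shows "ennreal (t powr (- n / s)) * Lnorm s S g \<le> ennreal e"
proof -
  define I where "I = (\<integral>\<^sup>+ v \<in> S. ennreal (\<bar>g v\<bar> powr s) \<partial>lebesgue)"
  have LI: "Lnorm s S g = (if I = \<infinity> then \<infinity> else ennreal (enn2real I powr (1 / s)))"
    unfolding Lnorm_def I_def Let_def by simp
  have w: "t powr (- n) > 0" using t by simp
  have False if "I = \<infinity>"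
    using le w unfolding I_def[symmetric] that by (simp add: ennreal_mult_eq_top_iff top_unique)
  then have nI: "I \<noteq> \<infinity>" by blast
  define J where "J = enn2real I"
  have J0: "J \<ge> 0" unfolding J_def by simp
  have IJ: "I = ennreal J" unfolding J_def using nI by (simp add: less_top)
  have "t powr (- n) * J \<le> e powr s"
    using le unfolding I_def[symmetric] IJ using w J0 e
    by (simp add: ennreal_mult[symmetric] ennreal_le_iff)
  then have "(t powr (- n) * J) powr (1 / s) \<le> (e powr s) powr (1 / s)"
    using s w J0 by (intro powr_mono2) auto
  also have "(e powr s) powr (1 / s) = e" using s e by (simp add: powr_powr)
  also have "(t powr (- n) * J) powr (1 / s) = t powr (- n / s) * J powr (1 / s)"
    using s t J0 by (simp add: powr_mult powr_powr)
  finally have "t powr (- n / s) * J powr (1 / s) \<le> e" .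
  then show ?thesis using LI nI unfolding J_def[symmetric]
    by (simp add: ennreal_mult[symmetric] ennreal_leI)
qed



lemma pw_main:
  fixes u1 u2 w1 w2 N a p q r l :: real
  assumes nn: "u1 \<ge> 0" "u2 \<ge> 0" "w1 \<ge> 0" "w2 \<ge> 0" "N \<ge> 0"
    and N: "N \<le> u1 * w2 + w1 * u2 + u1 * u2"
    and a: "a > 0" and pqr: "p > 0" "q > 0" "r > 0" "1 / r = 1 / p + 1 / q" and l: "l > 0"
  shows "(N powr a) powr r \<le> 3 powr (a * r) * ((l powr (- p) + 1) * (u1 powr a) powr p
     + (l powr (- q) + 1) * (u2 powr a) powr q + l powr q * (w2 powr a) powr q + l powr p * (w1 powr a) powr p)"
proof -
  have "(N powr a) powr r \<le> 3 powr (a * r) * (((u1 * w2) powr a) powr r + ((w1 * u2) powr a) powr r + ((u1 * u2) powr a) powr r)"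
    using nn N a pqr by (intro max3_powr) auto
  also have "((u1 * w2) powr a) powr r \<le> l powr (- p) * (u1 powr a) powr p + l powr q * (w2 powr a) powr q"
  proof -
    have "((u1 * w2) powr a) powr r = (u1 powr a * w2 powr a) powr r" using nn by (simp only: powr_mult)
    also have "\<dots> \<le> l powr (- p) * (u1 powr a) powr p + l powr q * (w2 powr a) powr q"
      using nn pqr l by (intro young_powr) auto
    finally show ?thesis .
  qed
  also have "((w1 * u2) powr a) powr r \<le> l powr (- q) * (u2 powr a) powr q + l powr p * (w1 powr a) powr p"
  proof -
    have "((w1 * u2) powr a) powr r = (u2 powr a * w1 powr a) powr r" using nn by (simp only: powr_mult mult.commute)
    also have "\<dots> \<le> l powr (- q) * (u2 powr a) powr q + l powr p * (w1 powr a) powr p"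
      using nn pqr l by (intro young_powr) auto
    finally show ?thesis .
  qed
  also have "((u1 * u2) powr a) powr r \<le> (u1 powr a) powr p + (u2 powr a) powr q"
  proof -
    have "((u1 * u2) powr a) powr r = (u1 powr a * u2 powr a) powr r" using nn by (simp only: powr_mult)
    also have "\<dots> \<le> 1 powr (- p) * (u1 powr a) powr p + 1 powr q * (u2 powr a) powr q"
      using nn pqr by (intro young_powr) auto
    finally show ?thesis by simp
  qed
  finally show ?thesis by (simp add: algebra_simps)
qed

lemma pw_unif:
  fixes u w M a q :: real
  assumes "u \<ge> 0" "w \<ge> 0" "M \<ge> 0" "w \<le> u + M" "a > 0" "q > 0"
  shows "(w powr a) powr q \<le> 3 powr (a * q) * ((u powr a) powr q + (M powr a) powr q)"
  using max3_powr[of u M 0 w a q] assms by simp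

lemma set_nn_integral_lebesgue_on:
  "S \<in> sets lebesgue \<Longrightarrow> (\<integral>\<^sup>+ v \<in> S. f v \<partial>lebesgue) = (\<integral>\<^sup>+ v. f v \<partial>lebesgue_on S)"
  by (subst nn_integral_restrict_space) auto

lemma key_integral:
  fixes S :: "(real^'n) set" and u1 u2 w1 w2 N :: "real^'n \<Rightarrow> real"
  assumes S: "S \<in> sets lebesgue"
    and m: "u1 \<in> borel_measurable (lebesgue_on S)" "u2 \<in> borel_measurable (lebesgue_on S)"
       "w1 \<in> borel_measurable (lebesgue_on S)" "w2 \<in> borel_measurable (lebesgue_on S)"
    and nn: "\<And>v. u1 v \<ge> 0" "\<And>v. u2 v \<ge> 0" "\<And>v. w1 v \<ge> 0" "\<And>v. w2 v \<ge> 0" "\<And>v. N v \<ge> 0"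
    and N: "\<And>v. N v \<le> u1 v * w2 v + w1 v * u2 v + u1 v * u2 v"
    and a: "a > 0" and pqr: "p > 0" "q > 0" "r > 0" "1 / r = 1 / p + 1 / q" and l: "l > 0"
  shows "(\<integral>\<^sup>+ v \<in> S. ennreal (\<bar>N v powr a\<bar> powr r) \<partial>lebesgue) \<le> ennreal (3 powr (a * r)) * (
      ennreal (l powr (- p) + 1) * (\<integral>\<^sup>+ v \<in> S. ennreal (\<bar>u1 v powr a\<bar> powr p) \<partial>lebesgue)
    + ennreal (l powr (- q) + 1) * (\<integral>\<^sup>+ v \<in> S. ennreal (\<bar>u2 v powr a\<bar> powr q) \<partial>lebesgue)
    + ennreal (l powr q) * (\<integral>\<^sup>+ v \<in> S. ennreal (\<bar>w2 v powr a\<bar> powr q) \<partial>lebesgue)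
    + ennreal (l powr p) * (\<integral>\<^sup>+ v \<in> S. ennreal (\<bar>w1 v powr a\<bar> powr p) \<partial>lebesgue))"
  unfolding set_nn_integral_lebesgue_on[OF S]
proof (rule nnint_bound4)
  show "(\<lambda>v. \<bar>u1 v powr a\<bar> powr p) \<in> borel_measurable (lebesgue_on S)" using m by measurable
  show "(\<lambda>v. \<bar>u2 v powr a\<bar> powr q) \<in> borel_measurable (lebesgue_on S)" using m by measurable
  show "(\<lambda>v. \<bar>w2 v powr a\<bar> powr q) \<in> borel_measurable (lebesgue_on S)" using m by measurable
  show "(\<lambda>v. \<bar>w1 v powr a\<bar> powr p) \<in> borel_measurable (lebesgue_on S)" using m by measurable
  show "0 \<le> 3 powr (a * r)" "0 \<le> l powr (- p) + 1" "0 \<le> l powr (- q) + 1" "0 \<le> l powr q" "0 \<le> l powr p"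
    by (auto intro: add_nonneg_nonneg)
  fix v
  show "0 \<le> \<bar>u1 v powr a\<bar> powr p \<and> 0 \<le> \<bar>u2 v powr a\<bar> powr q \<and> 0 \<le> \<bar>w2 v powr a\<bar> powr q \<and> 0 \<le> \<bar>w1 v powr a\<bar> powr p"
    by simp
  show "\<bar>N v powr a\<bar> powr r \<le> 3 powr (a * r) * ((l powr - p + 1) * \<bar>u1 v powr a\<bar> powr p + (l powr - q + 1) * \<bar>u2 v powr a\<bar> powr q +
       l powr q * \<bar>w2 v powr a\<bar> powr q + l powr p * \<bar>w1 v powr a\<bar> powr p)"
    using pw_main[OF nn(1-5)[of v] N[of v] a pqr l] by simp
qed

lemma unif_integral:
  fixes S :: "(real^'n) set" and u w :: "real^'n \<Rightarrow> real"
  assumes S: "S \<in> sets lebesgue"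
    and m: "u \<in> borel_measurable (lebesgue_on S)"
    and nn: "\<And>v. u v \<ge> 0" "\<And>v. w v \<ge> 0" and M: "M \<ge> 0"
    and le: "\<And>v. w v \<le> u v + M"
    and a: "a > 0" and q: "q > 0"
  shows "(\<integral>\<^sup>+ v \<in> S. ennreal (\<bar>w v powr a\<bar> powr q) \<partial>lebesgue) \<le> ennreal (3 powr (a * q)) * (
      (\<integral>\<^sup>+ v \<in> S. ennreal (\<bar>u v powr a\<bar> powr q) \<partial>lebesgue) + ennreal ((M powr a) powr q) * emeasure lebesgue S)"
proof -
  have "(\<integral>\<^sup>+ v. ennreal (\<bar>w v powr a\<bar> powr q) \<partial>lebesgue_on S) \<le> ennreal (3 powr (a * q)) * (
      (\<integral>\<^sup>+ v. ennreal (\<bar>u v powr a\<bar> powr q) \<partial>lebesgue_on S) + ennreal ((M powr a) powr q) * emeasure (lebesgue_on S) (space (lebesgue_on S)))"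
  proof (rule nnint_bound2)
    show "(\<lambda>v. \<bar>u v powr a\<bar> powr q) \<in> borel_measurable (lebesgue_on S)" using m by measurable
    fix v
    show "\<bar>w v powr a\<bar> powr q \<le> 3 powr (a * q) * (\<bar>u v powr a\<bar> powr q + (M powr a) powr q)"
      using pw_unif[OF nn(1)[of v] nn(2)[of v] M le[of v] a q] by simp
  qed auto
  moreover have "emeasure (lebesgue_on S) (space (lebesgue_on S)) = emeasure lebesgue S"
    using S by (simp add: emeasure_restrict_space)
  ultimately show ?thesis unfolding set_nn_integral_lebesgue_on[OF S] by simp
qed



lemma measurable_pair_sc:
  fixes f :: "'m \<Rightarrow> 'a::second_countable_topology" and g :: "'m \<Rightarrow> 'b::topological_space"
    and H :: "'a \<Rightarrow> 'b \<Rightarrow> 'c::topological_space"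
  assumes f: "f \<in> borel_measurable M" and g: "g \<in> borel_measurable M"
    and H: "continuous_on UNIV (\<lambda>z. H (fst z) (snd z))"
  shows "(\<lambda>x. H (f x) (g x)) \<in> borel_measurable M"
proof (rule borel_measurableI)
  fix S :: "'c set" assume "open S"
  define W where "W = (\<lambda>z. H (fst z) (snd z)) -` S"
  have oW: "open W" unfolding W_def using H \<open>open S\<close>
    by (simp add: continuous_on_open_vimage)
  obtain \<B> :: "'a set set" where cB: "countable \<B>" and oB: "\<And>C. C \<in> \<B> \<Longrightarrow> open C"
    and bB: "\<And>S. open S \<Longrightarrow> \<exists>U. U \<subseteq> \<B> \<and> S = \<Union>U"
    by (rule univ_second_countable) blast
  define V where "V = (\<lambda>U. \<Union>{V. open V \<and> U \<times> V \<subseteq> W})"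
  have oV: "open (V U)" for U unfolding V_def by auto
  have WU: "W = (\<Union>U\<in>\<B>. U \<times> V U)"
  proof
    show "W \<subseteq> (\<Union>U\<in>\<B>. U \<times> V U)"
    proof
      fix z assume "z \<in> W"
      then obtain A B where AB: "open A" "open B" "z \<in> A \<times> B" "A \<times> B \<subseteq> W"
        using oW open_prod_elim by metis
      obtain U where "U \<subseteq> \<B>" "A = \<Union>U" using bB[OF \<open>open A\<close>] by blast
      moreover obtain C where "C \<in> U" "fst z \<in> C" using AB(3) \<open>A = \<Union>U\<close> by (auto simp: mem_Times_iff)
      ultimately have C: "C \<in> \<B>" "fst z \<in> C" "C \<subseteq> A" by auto
      have "B \<subseteq> V C" unfolding V_def using AB C by blast
      then show "z \<in> (\<Union>U\<in>\<B>. U \<times> V U)" using C AB(3) by (auto intro!: bexI[of _ C] simp: mem_Times_iff)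
    qed
    show "(\<Union>U\<in>\<B>. U \<times> V U) \<subseteq> W" unfolding V_def by auto
  qed
  have "(\<lambda>x. H (f x) (g x)) -` S \<inter> space M = (\<Union>U\<in>\<B>. (f -` U \<inter> space M) \<inter> (g -` V U \<inter> space M))"
    using WU unfolding W_def by (auto simp: set_eq_iff)
  also have "\<dots> \<in> sets M"
    using cB oB oV f g by (intro sets.countable_UN' sets.Int) (auto intro: measurable_sets_borel)
  finally show "(\<lambda>x. H (f x) (g x)) -` S \<inter> space M \<in> sets M" .
qed

lemma meas_diff_trig:
  fixes f :: "real^'n \<Rightarrow> 'z::complex_normed_vector" and P :: "real^'n \<Rightarrow> 'x::real_normed_vector \<Rightarrow> 'z"
  assumes L: "Lam \<in> sets lebesgue" and f: "f \<in> borel_measurable (lebesgue_on Lam)" and P: "trig_poly P"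
  shows "(\<lambda>v. norm (f v - P v x)) \<in> borel_measurable (lebesgue_on Lam)"
proof -
  have id: "(\<lambda>v. v) \<in> borel_measurable (lebesgue_on Lam)"
    using L by (intro continuous_imp_measurable_on_sets_lebesgue continuous_on_id)
  have c: "continuous_on UNIV (\<lambda>v. P v x)" using trig_poly_continuous[OF P] .
  have "continuous_on UNIV (\<lambda>z::(real^'n) \<times> 'z. snd z - P (fst z) x)"
    by (intro continuous_on_diff continuous_on_snd continuous_on_compose2[OF c] continuous_on_fst continuous_on_id) auto
  then have "(\<lambda>v. f v - P v x) \<in> borel_measurable (lebesgue_on Lam)"
    using measurable_pair_sc[OF id f, of "\<lambda>t w. w - P t x"] by simp
  then show ?thesis by (rule measurable_compose[OF _ borel_measurable_norm])
qed

lemma meas_prod: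
  fixes f :: "real^'n \<Rightarrow> complex" and g :: "real^'n \<Rightarrow> 'y::complex_normed_vector"
  assumes "f \<in> borel_measurable M" "g \<in> borel_measurable M"
  shows "(\<lambda>v. scaleC (f v) (g v)) \<in> borel_measurable M"
proof -
  have "continuous_on UNIV (\<lambda>z::complex \<times> 'y. scaleC (fst z) (snd z))"
    by (intro continuous_on_scaleC continuous_on_fst continuous_on_snd continuous_on_id)
  then show ?thesis using measurable_pair_complex[OF assms, of scaleC] by simp
qed



lemma norm_scaleC_diff:
  fixes a c :: complex and b d :: "'y::complex_normed_vector"
  shows "norm (scaleC a b - scaleC c d) \<le> norm (a - c) * norm b + norm a * norm (b - d) + norm (a - c) * norm (b - d)"
proof -
  have "scaleC a b - scaleC c d = scaleC (a - c) b + scaleC a (b - d) - scaleC (a - c) (b - d)"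
    by (simp add: scaleC_diff_left scaleC_diff_right algebra_simps)
  also have "norm \<dots> \<le> norm (scaleC (a - c) b + scaleC a (b - d)) + norm (scaleC (a - c) (b - d))"
    by (rule norm_triangle_ineq4)
  also have "\<dots> \<le> norm (scaleC (a - c) b) + norm (scaleC a (b - d)) + norm (scaleC (a - c) (b - d))"
    using norm_triangle_ineq by (intro add_right_mono) blast
  finally show ?thesis by (simp add: norm_scaleC)
qed

lemma powr_le_self: "0 \<le> (x::real) \<Longrightarrow> x \<le> 1 \<Longrightarrow> 1 \<le> p \<Longrightarrow> x powr p \<le> x"
  using powr_mono'[of 1 p x] by (cases "x = 0") auto

lemma ennreal_tendsto_0I:
  fixes f :: "nat \<Rightarrow> ennreal"
  assumes "\<And>e. e > 0 \<Longrightarrow> eventually (\<lambda>k. f k \<le> ennreal e) sequentially"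
  shows "f \<longlonglongrightarrow> 0"
proof (rule order_tendstoI)
  fix a :: ennreal assume "a < 0" then show "eventually (\<lambda>k. a < f k) sequentially" by simp
next
  fix a :: ennreal assume "0 < a"
  then obtain z where z: "0 < z" "z < a" using dense by blast
  then have "z \<noteq> \<infinity>" using top_greatest[of a] by (auto simp: top_unique)
  then obtain e where e: "z = ennreal e" "e \<ge> 0" by (cases z) auto
  with z have "e > 0" by auto
  from assms[OF this] show "eventually (\<lambda>k. f k < a) sequentially"
    by eventually_elim (use z e in auto)
qed

lemma small_bound:
  fixes F :: "real^'n \<Rightarrow> 'x \<Rightarrow> 'z::complex_normed_vector" and P :: "real^'n \<Rightarrow> 'x \<Rightarrow> 'z"
  assumes s: "s > 0" and d: "d > 0"
    and lt: "Limsup at_top (\<lambda>t. ennreal (t powr (- real CARD('n) / s)) *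
        (SUP x\<in>B. Lnorm s (Lambda_t Lam t) (\<lambda>v. norm (F v x - P v x) powr a))) < ennreal d"
  shows "eventually (\<lambda>t. t > 0 \<and> (\<forall>x\<in>B. ennreal (t powr (- real CARD('n))) *
     (\<integral>\<^sup>+ v \<in> Lambda_t Lam t. ennreal (\<bar>norm (F v x - P v x) powr a\<bar> powr s) \<partial>lebesgue) < ennreal (d powr s))) at_top"
proof -
  have "eventually (\<lambda>t. ennreal (t powr (- real CARD('n) / s)) *
        (SUP x\<in>B. Lnorm s (Lambda_t Lam t) (\<lambda>v. norm (F v x - P v x) powr a)) < ennreal d) at_top"
    using Limsup_lessD[OF lt] .
  moreover have "eventually (\<lambda>t::real. t > 0) at_top" by (rule eventually_gt_at_top)
  ultimately show ?thesis
  proof eventually_elim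
    case (elim t)
    show ?case
    proof (intro conjI ballI)
      show "t > 0" using elim by simp
      fix x assume x: "x \<in> B"
      have "ennreal (t powr (- real CARD('n) / s)) * Lnorm s (Lambda_t Lam t) (\<lambda>v. norm (F v x - P v x) powr a)
         \<le> ennreal (t powr (- real CARD('n) / s)) * (SUP x\<in>B. Lnorm s (Lambda_t Lam t) (\<lambda>v. norm (F v x - P v x) powr a))"
        using x by (intro mult_left_mono SUP_upper) auto
      also have "\<dots> < ennreal d" using elim by simp
      finally show "ennreal (t powr (- real CARD('n))) *
         (\<integral>\<^sup>+ v \<in> Lambda_t Lam t. ennreal (\<bar>norm (F v x - P v x) powr a\<bar> powr s) \<partial>lebesgue) < ennreal (d powr s)"
        using Lnorm_lt[OF _ s d] elim by blast
    qed
  qed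
qed

lemma weight_measure:
  fixes Lam :: "(real^'n) set"
  assumes "t > 0"
  shows "ennreal (t powr (- real CARD('n))) * emeasure lebesgue (Lambda_t Lam t) \<le> ennreal (2 ^ CARD('n))"
proof -
  have "ennreal (t powr (- real CARD('n))) * emeasure lebesgue (Lambda_t Lam t)
      \<le> ennreal (t powr (- real CARD('n))) * ennreal ((2 * t) ^ CARD('n))"
    using assms by (intro mult_left_mono emeasure_Lambda_t) auto
  also have "\<dots> = ennreal (t powr (- real CARD('n)) * (2 * t) ^ CARD('n))"
    using assms by (simp add: ennreal_mult)
  also have "t powr (- real CARD('n)) * (2 * t) ^ CARD('n) = 2 ^ CARD('n)"
    using assms by (simp add: power_mult_distrib powr_minus powr_realpow[symmetric] field_simps)
  finally show ?thesis by simp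
qed



lemma Lambda_t_subset: "Lambda_t Lam t \<subseteq> Lam"
  unfolding Lambda_t_def by auto

lemma meas_on_Lambda_t:
  assumes "Lam \<in> sets lebesgue" "f \<in> borel_measurable (lebesgue_on Lam)"
  shows "f \<in> borel_measurable (lebesgue_on (Lambda_t Lam t))"
  using measurable_restrict_mono[OF assms(2) Lambda_t_subset] .

lemma unif_bound:
  fixes F :: "real^'n \<Rightarrow> 'x::real_normed_vector \<Rightarrow> 'z::complex_normed_vector" and P :: "real^'n \<Rightarrow> 'x \<Rightarrow> 'z"
  assumes L: "Lam \<in> sets lebesgue" and mF: "\<forall>x. (\<lambda>t. F t x) \<in> borel_measurable (lebesgue_on Lam)"
    and P: "trig_poly P" and B: "bounded B" and s: "s > 0" and a: "a > 0"
    and lt: "Limsup at_top (\<lambda>t. ennreal (t powr (- real CARD('n) / s)) *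
        (SUP x\<in>B. Lnorm s (Lambda_t Lam t) (\<lambda>v. norm (F v x - P v x) powr a))) < ennreal 1"
  shows "\<exists>V\<ge>0. eventually (\<lambda>t. \<forall>x\<in>B. ennreal (t powr (- real CARD('n))) *
     (\<integral>\<^sup>+ v \<in> Lambda_t Lam t. ennreal (\<bar>norm (F v x) powr a\<bar> powr s) \<partial>lebesgue) \<le> ennreal V) at_top"
proof -
  obtain M0 where M0: "\<forall>t. \<forall>x\<in>B. norm (P t x) \<le> M0" using trig_poly_bounded[OF P B] by blast
  define M where "M = max 0 M0"
  have M: "M \<ge> 0" "\<And>t x. x \<in> B \<Longrightarrow> norm (P t x) \<le> M" using M0 unfolding M_def by (auto intro: le_max_iff_disj[THEN iffD2])
  define V where "V = 3 powr (a * s) * (1 + (M powr a) powr s * 2 ^ CARD('n))"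
  have V0: "V \<ge> 0" unfolding V_def by simp
  have ev: "eventually (\<lambda>t. t > 0 \<and> (\<forall>x\<in>B. ennreal (t powr (- real CARD('n))) *
     (\<integral>\<^sup>+ v \<in> Lambda_t Lam t. ennreal (\<bar>norm (F v x - P v x) powr a\<bar> powr s) \<partial>lebesgue) < ennreal (1 powr s))) at_top"
    by (rule small_bound[OF s _ lt]) simp
  have "eventually (\<lambda>t. \<forall>x\<in>B. ennreal (t powr (- real CARD('n))) *
     (\<integral>\<^sup>+ v \<in> Lambda_t Lam t. ennreal (\<bar>norm (F v x) powr a\<bar> powr s) \<partial>lebesgue) \<le> ennreal V) at_top"
    using ev
  proof eventually_elim
    case (elim t)
    show ?case
    proof
      fix x assume x: "x \<in> B"
      define S where "S = Lambda_t Lam t"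
      have S: "S \<in> sets lebesgue" unfolding S_def using L by (rule Lambda_t_sets)
      have mu: "(\<lambda>v. norm (F v x - P v x)) \<in> borel_measurable (lebesgue_on S)"
        unfolding S_def using L meas_diff_trig[OF L _ P] mF by (intro meas_on_Lambda_t) auto
      have le: "norm (F v x) \<le> norm (F v x - P v x) + M" for v
        using norm_triangle_sub[of "F v x" "P v x"] M(2)[OF x, of v] by linarith
      have w: "t powr (- real CARD('n)) \<ge> 0" by simp
      define Ja where "Ja = (\<integral>\<^sup>+ v \<in> S. ennreal (\<bar>norm (F v x - P v x) powr a\<bar> powr s) \<partial>lebesgue)"
      have "ennreal (t powr (- real CARD('n))) * (\<integral>\<^sup>+ v \<in> S. ennreal (\<bar>norm (F v x) powr a\<bar> powr s) \<partial>lebesgue)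
         \<le> ennreal (t powr (- real CARD('n))) * (ennreal (3 powr (a * s)) * (Ja + ennreal ((M powr a) powr s) * emeasure lebesgue S))"
        unfolding Ja_def by (intro mult_left_mono unif_integral[OF S mu _ _ M(1) le a s]) auto
      also have "\<dots> = ennreal (3 powr (a * s)) * (ennreal (t powr (- real CARD('n))) * Ja
          + ennreal ((M powr a) powr s) * (ennreal (t powr (- real CARD('n))) * emeasure lebesgue S))"
        by (simp add: algebra_simps)
      also have "\<dots> \<le> ennreal (3 powr (a * s)) * (1 + ennreal ((M powr a) powr s) * ennreal (2 ^ CARD('n)))"
      proof -
        have "ennreal (t powr (- real CARD('n))) * Ja \<le> 1"
          using elim x unfolding Ja_def S_def by (auto intro: less_imp_le)
        moreover have "ennreal (t powr (- real CARD('n))) * emeasure lebesgue S \<le> ennreal (2 ^ CARD('n))"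
          unfolding S_def using weight_measure elim by blast
        ultimately show ?thesis by (intro mult_left_mono add_mono) auto
      qed
      also have "\<dots> = ennreal V" unfolding V_def
        by (simp add: ennreal_mult ennreal_plus)
      finally show "ennreal (t powr (- real CARD('n))) *
     (\<integral>\<^sup>+ v \<in> Lambda_t Lam t. ennreal (\<bar>norm (F v x) powr a\<bar> powr s) \<partial>lebesgue) \<le> ennreal V"
        unfolding S_def .
    qed
  qed
  then show ?thesis using V0 by blast
qed



lemma real_choice:
  fixes K e U0 V0 p q :: real
  assumes K: "K > 0" and e: "e > 0" and U: "U0 \<ge> 0" and V: "V0 \<ge> 0" and p: "p \<ge> 1" and q: "q \<ge> 1"
  shows "\<exists>l d. 0 < l \<and> 0 < d \<and> K * ((l powr (- p) + 1) * d powr p + (l powr (- q) + 1) * d powr q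
           + l powr q * U0 + l powr p * V0) \<le> e"
proof -
  define l where "l = min 1 (e / (2 * K * (U0 + V0 + 1)))"
  have l0: "l > 0" unfolding l_def using K e U V by (auto intro!: divide_pos_pos)
  have l1: "l \<le> 1" unfolding l_def by simp
  define A where "A = l powr (- p) + l powr (- q) + 2"
  have A: "A > 0" unfolding A_def by (simp add: add_nonneg_pos)
  define d where "d = min 1 (e / (2 * K * A))"
  have d0: "d > 0" unfolding d_def using K e A by auto
  have d1: "d \<le> 1" unfolding d_def by simp
  have "K * ((l powr (- p) + 1) * d powr p + (l powr (- q) + 1) * d powr q + l powr q * U0 + l powr p * V0)
      \<le> K * ((l powr (- p) + 1) * d + (l powr (- q) + 1) * d + l * U0 + l * V0)"
    using K U V p q l0 l1 d0 d1 powr_le_self[of d p] powr_le_self[of d q] powr_le_self[of l p] powr_le_self[of l q]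
    by (intro mult_left_mono add_mono mult_left_mono mult_right_mono) (auto simp: add_nonneg_nonneg)
  also have "\<dots> = K * d * A + K * l * (U0 + V0)" unfolding A_def by (simp add: algebra_simps)
  also have "K * d * A \<le> e / 2"
  proof -
    have "d \<le> e / (2 * K * A)" unfolding d_def by simp
    then have "K * A * d \<le> K * A * (e / (2 * K * A))" using K A by (intro mult_left_mono) auto
    also have "\<dots> = e / 2" using K A by (simp add: field_simps)
    finally show ?thesis by (simp add: mult_ac)
  qed
  also have "K * l * (U0 + V0) \<le> e / 2"
  proof -
    define W where "W = U0 + V0 + 1"
    have W: "W > 0" unfolding W_def using U V by simp
    have "l \<le> e / (2 * K * W)" unfolding l_def W_def by simp
    have "K * l * (U0 + V0) \<le> K * W * l" unfolding W_def using K l0 by simp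
    also have "\<dots> \<le> K * W * (e / (2 * K * W))" using K W \<open>l \<le> e / (2 * K * W)\<close> by (intro mult_left_mono) auto
    also have "\<dots> = e / 2" using K W by (simp add: field_simps)
    finally show ?thesis .
  qed
  finally show ?thesis using l0 d0 by auto
qed



lemma core:
  fixes F1 :: "real^'n \<Rightarrow> 'x::real_normed_vector \<Rightarrow> complex"
    and F2 :: "real^'n \<Rightarrow> 'x \<Rightarrow> 'y::complex_normed_vector"
    and P1 :: "nat \<Rightarrow> real^'n \<Rightarrow> 'x \<Rightarrow> complex"
    and P2 :: "nat \<Rightarrow> real^'n \<Rightarrow> 'x \<Rightarrow> 'y"
  assumes L: "Lam \<in> sets lebesgue"
    and mF1: "\<forall>x. (\<lambda>t. F1 t x) \<in> borel_measurable (lebesgue_on Lam)"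
    and mF2: "\<forall>x. (\<lambda>t. F2 t x) \<in> borel_measurable (lebesgue_on Lam)"
    and P1: "\<forall>k. trig_poly (P1 k)" and P2: "\<forall>k. trig_poly (P2 k)" and bB: "bounded B"
    and p: "p \<ge> 1" and q: "q \<ge> 1" and r: "r \<ge> 1" and pqr: "1 / r = 1 / p + 1 / q" and a: "a > 0"
    and T1: "(\<lambda>k. Limsup at_top (\<lambda>t. ennreal (t powr (- real CARD('n) / p)) *
        (SUP x\<in>B. Lnorm p (Lambda_t Lam t) (\<lambda>v. norm (F1 v x - P1 k v x) powr a)))) \<longlonglongrightarrow> 0"
    and T2: "(\<lambda>k. Limsup at_top (\<lambda>t. ennreal (t powr (- real CARD('n) / q)) *
        (SUP x\<in>B. Lnorm q (Lambda_t Lam t) (\<lambda>v. norm (F2 v x - P2 k v x) powr a)))) \<longlonglongrightarrow> 0"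
  shows "(\<lambda>k. Limsup at_top (\<lambda>t. ennreal (t powr (- real CARD('n) / r)) *
        (SUP x\<in>B. Lnorm r (Lambda_t Lam t)
           (\<lambda>v. norm (scaleC (F1 v x) (F2 v x) - scaleC (P1 k v x) (P2 k v x)) powr a)))) \<longlonglongrightarrow> 0"
proof -
  have p0: "p > 0" and q0: "q > 0" and r0: "r > 0" using p q r by auto
  have "eventually (\<lambda>k. Limsup at_top (\<lambda>t. ennreal (t powr (- real CARD('n) / p)) *
        (SUP x\<in>B. Lnorm p (Lambda_t Lam t) (\<lambda>v. norm (F1 v x - P1 k v x) powr a))) < ennreal 1) sequentially"
    using order_tendstoD(2)[OF T1] by simp
  then obtain k1 where k1: "Limsup at_top (\<lambda>t. ennreal (t powr (- real CARD('n) / p)) *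
        (SUP x\<in>B. Lnorm p (Lambda_t Lam t) (\<lambda>v. norm (F1 v x - P1 k1 v x) powr a))) < ennreal 1"
    by (auto simp: eventually_sequentially)
  obtain V0 where V0: "V0 \<ge> 0" and EV: "eventually (\<lambda>t. \<forall>x\<in>B. ennreal (t powr (- real CARD('n))) *
     (\<integral>\<^sup>+ v \<in> Lambda_t Lam t. ennreal (\<bar>norm (F1 v x) powr a\<bar> powr p) \<partial>lebesgue) \<le> ennreal V0) at_top"
    using unif_bound[OF L mF1 _ bB p0 a k1] P1 by blast
  have "eventually (\<lambda>k. Limsup at_top (\<lambda>t. ennreal (t powr (- real CARD('n) / q)) *
        (SUP x\<in>B. Lnorm q (Lambda_t Lam t) (\<lambda>v. norm (F2 v x - P2 k v x) powr a))) < ennreal 1) sequentially"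
    using order_tendstoD(2)[OF T2] by simp
  then obtain k2 where k2: "Limsup at_top (\<lambda>t. ennreal (t powr (- real CARD('n) / q)) *
        (SUP x\<in>B. Lnorm q (Lambda_t Lam t) (\<lambda>v. norm (F2 v x - P2 k2 v x) powr a))) < ennreal 1"
    by (auto simp: eventually_sequentially)
  obtain U0 where U0: "U0 \<ge> 0" and EU: "eventually (\<lambda>t. \<forall>x\<in>B. ennreal (t powr (- real CARD('n))) *
     (\<integral>\<^sup>+ v \<in> Lambda_t Lam t. ennreal (\<bar>norm (F2 v x) powr a\<bar> powr q) \<partial>lebesgue) \<le> ennreal U0) at_top"
    using unif_bound[OF L mF2 _ bB q0 a k2] P2 by blast
  show ?thesis
  proof (rule ennreal_tendsto_0I)
    fix e :: real assume e: "e > 0"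
    define K where "K = 3 powr (a * r)"
    have K: "K > 0" unfolding K_def by simp
    obtain l d where l: "l > 0" and d: "d > 0" and ineq: "K * ((l powr (- p) + 1) * d powr p + (l powr (- q) + 1) * d powr q
           + l powr q * U0 + l powr p * V0) \<le> e powr r"
      using real_choice[OF K _ U0 V0 p q, of "e powr r"] e by auto
    have ev1: "eventually (\<lambda>k. Limsup at_top (\<lambda>t. ennreal (t powr (- real CARD('n) / p)) *
        (SUP x\<in>B. Lnorm p (Lambda_t Lam t) (\<lambda>v. norm (F1 v x - P1 k v x) powr a))) < ennreal d) sequentially"
      using order_tendstoD(2)[OF T1] d by simp
    have ev2: "eventually (\<lambda>k. Limsup at_top (\<lambda>t. ennreal (t powr (- real CARD('n) / q)) *
        (SUP x\<in>B. Lnorm q (Lambda_t Lam t) (\<lambda>v. norm (F2 v x - P2 k v x) powr a))) < ennreal d) sequentially"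
      using order_tendstoD(2)[OF T2] d by simp
    from ev1 ev2 show "eventually (\<lambda>k. Limsup at_top (\<lambda>t. ennreal (t powr (- real CARD('n) / r)) *
        (SUP x\<in>B. Lnorm r (Lambda_t Lam t)
           (\<lambda>v. norm (scaleC (F1 v x) (F2 v x) - scaleC (P1 k v x) (P2 k v x)) powr a))) \<le> ennreal e) sequentially"
    proof eventually_elim
      case (elim k)
      have E1: "eventually (\<lambda>t. t > 0 \<and> (\<forall>x\<in>B. ennreal (t powr (- real CARD('n))) *
         (\<integral>\<^sup>+ v \<in> Lambda_t Lam t. ennreal (\<bar>norm (F1 v x - P1 k v x) powr a\<bar> powr p) \<partial>lebesgue) < ennreal (d powr p))) at_top"
        using small_bound[OF p0 d] elim by blast
      have E2: "eventually (\<lambda>t. t > 0 \<and> (\<forall>x\<in>B. ennreal (t powr (- real CARD('n))) *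
         (\<integral>\<^sup>+ v \<in> Lambda_t Lam t. ennreal (\<bar>norm (F2 v x - P2 k v x) powr a\<bar> powr q) \<partial>lebesgue) < ennreal (d powr q))) at_top"
        using small_bound[OF q0 d] elim by blast
      show ?case
      proof (rule Limsup_bounded)
        from E1 E2 EU EV show "eventually (\<lambda>t. ennreal (t powr (- real CARD('n) / r)) *
          (SUP x\<in>B. Lnorm r (Lambda_t Lam t)
           (\<lambda>v. norm (scaleC (F1 v x) (F2 v x) - scaleC (P1 k v x) (P2 k v x)) powr a)) \<le> ennreal e) at_top"
        proof eventually_elim
          case (elim t)
          have t: "t > 0" using elim by blast
          have each: "ennreal (t powr (- real CARD('n) / r)) * Lnorm r (Lambda_t Lam t)
               (\<lambda>v. norm (scaleC (F1 v x) (F2 v x) - scaleC (P1 k v x) (P2 k v x)) powr a) \<le> ennreal e"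
            if x: "x \<in> B" for x
          proof (rule Lnorm_le[OF t r0 less_imp_le[OF e]])
            define S where "S = Lambda_t Lam t"
            have S: "S \<in> sets lebesgue" unfolding S_def using L by (rule Lambda_t_sets)
            have mu1: "(\<lambda>v. norm (F1 v x - P1 k v x)) \<in> borel_measurable (lebesgue_on S)"
              unfolding S_def using L meas_diff_trig[OF L _ P1[rule_format]] mF1 by (intro meas_on_Lambda_t) auto
            have mu2: "(\<lambda>v. norm (F2 v x - P2 k v x)) \<in> borel_measurable (lebesgue_on S)"
              unfolding S_def using L meas_diff_trig[OF L _ P2[rule_format]] mF2 by (intro meas_on_Lambda_t) auto
            have mw1: "(\<lambda>v. norm (F1 v x)) \<in> borel_measurable (lebesgue_on S)"
              unfolding S_def using L mF1 by (intro meas_on_Lambda_t measurable_compose[OF _ borel_measurable_norm]) auto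
            have mw2: "(\<lambda>v. norm (F2 v x)) \<in> borel_measurable (lebesgue_on S)"
              unfolding S_def using L mF2 by (intro meas_on_Lambda_t measurable_compose[OF _ borel_measurable_norm]) auto
            have Nle: "norm (scaleC (F1 v x) (F2 v x) - scaleC (P1 k v x) (P2 k v x))
               \<le> norm (F1 v x - P1 k v x) * norm (F2 v x) + norm (F1 v x) * norm (F2 v x - P2 k v x)
                 + norm (F1 v x - P1 k v x) * norm (F2 v x - P2 k v x)" for v
              by (rule norm_scaleC_diff)
            define w where "w = ennreal (t powr (- real CARD('n)))"
            define Ja where "Ja = (\<integral>\<^sup>+ v \<in> S. ennreal (\<bar>norm (F1 v x - P1 k v x) powr a\<bar> powr p) \<partial>lebesgue)"
            define Jb where "Jb = (\<integral>\<^sup>+ v \<in> S. ennreal (\<bar>norm (F2 v x - P2 k v x) powr a\<bar> powr q) \<partial>lebesgue)"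
            define JG where "JG = (\<integral>\<^sup>+ v \<in> S. ennreal (\<bar>norm (F2 v x) powr a\<bar> powr q) \<partial>lebesgue)"
            define JE where "JE = (\<integral>\<^sup>+ v \<in> S. ennreal (\<bar>norm (F1 v x) powr a\<bar> powr p) \<partial>lebesgue)"
            have KI: "(\<integral>\<^sup>+ v \<in> S. ennreal (\<bar>norm (scaleC (F1 v x) (F2 v x) - scaleC (P1 k v x) (P2 k v x)) powr a\<bar> powr r) \<partial>lebesgue)
               \<le> ennreal K * (ennreal (l powr (- p) + 1) * Ja + ennreal (l powr (- q) + 1) * Jb
                  + ennreal (l powr q) * JG + ennreal (l powr p) * JE)"
              unfolding K_def Ja_def Jb_def JG_def JE_def
              by (rule key_integral[OF S mu1 mu2 mw1 mw2 _ _ _ _ _ Nle a p0 q0 r0 pqr l]) auto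
            have "w * (\<integral>\<^sup>+ v \<in> S. ennreal (\<bar>norm (scaleC (F1 v x) (F2 v x) - scaleC (P1 k v x) (P2 k v x)) powr a\<bar> powr r) \<partial>lebesgue)
              \<le> w * (ennreal K * (ennreal (l powr (- p) + 1) * Ja + ennreal (l powr (- q) + 1) * Jb
                  + ennreal (l powr q) * JG + ennreal (l powr p) * JE))"
              using KI by (rule mult_left_mono) simp
            also have "\<dots> = ennreal K * (ennreal (l powr (- p) + 1) * (w * Ja) + ennreal (l powr (- q) + 1) * (w * Jb)
                  + ennreal (l powr q) * (w * JG) + ennreal (l powr p) * (w * JE))"
              by (simp add: algebra_simps)
            also have "\<dots> \<le> ennreal K * (ennreal (l powr (- p) + 1) * ennreal (d powr p) + ennreal (l powr (- q) + 1) * ennreal (d powr q)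
                  + ennreal (l powr q) * ennreal U0 + ennreal (l powr p) * ennreal V0)"
            proof -
              have "w * Ja \<le> ennreal (d powr p)" using elim x unfolding w_def Ja_def S_def by (auto intro: less_imp_le)
              moreover have "w * Jb \<le> ennreal (d powr q)" using elim x unfolding w_def Jb_def S_def by (auto intro: less_imp_le)
              moreover have "w * JG \<le> ennreal U0" using elim x unfolding w_def JG_def S_def by auto
              moreover have "w * JE \<le> ennreal V0" using elim x unfolding w_def JE_def S_def by auto
              ultimately show ?thesis by (intro mult_left_mono add_mono) auto
            qed
            also have "\<dots> = ennreal (K * ((l powr (- p) + 1) * d powr p + (l powr (- q) + 1) * d powr q
                  + l powr q * U0 + l powr p * V0))"
              using K U0 V0 by (simp add: ennreal_mult ennreal_plus add_nonneg_nonneg)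
            also have "\<dots> \<le> ennreal (e powr r)" using ineq by (rule ennreal_leI)
            finally show "ennreal (t powr (- real CARD('n))) * (\<integral>\<^sup>+ v \<in> Lambda_t Lam t.
               ennreal (\<bar>norm (scaleC (F1 v x) (F2 v x) - scaleC (P1 k v x) (P2 k v x)) powr a\<bar> powr r) \<partial>lebesgue) \<le> ennreal (e powr r)"
              unfolding w_def S_def .
          qed
          show ?case unfolding SUP_mult_left_ennreal using each by (rule SUP_least)
        qed
      qed
    qed
  qed
qed



theorem proposition2p7:
  fixes BB :: "'x::{complex_normed_vector, banach} set set"
    and Lam :: "(real^'n) set"
    and F1 :: "real^'n \<Rightarrow> 'x \<Rightarrow> complex"
    and F2 :: "real^'n \<Rightarrow> 'x \<Rightarrow> 'y::{complex_normed_vector, banach}"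
    and p q r \<alpha> :: real
  assumes "Lam \<in> sets lebesgue" and "Lam \<noteq> {}"
    and "BB \<noteq> {}" and "\<forall>B \<in> BB. B \<noteq> {}" and "\<Union>BB = UNIV"
    and "p \<ge> 1" and "q \<ge> 1" and "r \<ge> 1" and "1 / r = 1 / p + 1 / q"
    and "\<alpha> > 0"
    and "\<forall>B \<in> BB. bounded B"
    and "e_Besicovitch BB (\<lambda>s. s powr \<alpha>) (\<lambda>t. t powr (- real CARD('n) / p)) p Lam F1"
    and "e_Besicovitch BB (\<lambda>s. s powr \<alpha>) (\<lambda>t. t powr (- real CARD('n) / q)) q Lam F2"
  shows "e_Besicovitch BB (\<lambda>s. s powr \<alpha>) (\<lambda>t. t powr (- real CARD('n) / r)) r Lam
           (\<lambda>t x. scaleC (F1 t x) (F2 t x))"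
proof -
  have h1: "(\<forall>x. (\<lambda>t. F1 t x) \<in> borel_measurable (lebesgue_on Lam)) \<and>
     (\<forall>B \<in> BB. \<exists>P :: nat \<Rightarrow> real^'n \<Rightarrow> 'x \<Rightarrow> complex. (\<forall>k. trig_poly (P k)) \<and>
        (\<lambda>k. Limsup at_top (\<lambda>t. ennreal (t powr (- real CARD('n) / p)) *
               (SUP x \<in> B. Lnorm p (Lambda_t Lam t) (\<lambda>v. norm (F1 v x - P k v x) powr \<alpha>)))) \<longlonglongrightarrow> 0)"
    using assms(12) unfolding e_Besicovitch_def by simp
  have h2: "(\<forall>x. (\<lambda>t. F2 t x) \<in> borel_measurable (lebesgue_on Lam)) \<and>
     (\<forall>B \<in> BB. \<exists>P :: nat \<Rightarrow> real^'n \<Rightarrow> 'x \<Rightarrow> 'y. (\<forall>k. trig_poly (P k)) \<and>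
        (\<lambda>k. Limsup at_top (\<lambda>t. ennreal (t powr (- real CARD('n) / q)) *
               (SUP x \<in> B. Lnorm q (Lambda_t Lam t) (\<lambda>v. norm (F2 v x - P k v x) powr \<alpha>)))) \<longlonglongrightarrow> 0)"
    using assms(13) unfolding e_Besicovitch_def by simp
  have meas: "\<forall>x. (\<lambda>t. scaleC (F1 t x) (F2 t x)) \<in> borel_measurable (lebesgue_on Lam)"
    using h1 h2 by (auto intro: meas_prod)
  have conv: "\<exists>P :: nat \<Rightarrow> real^'n \<Rightarrow> 'x \<Rightarrow> 'y. (\<forall>k. trig_poly (P k)) \<and>
        (\<lambda>k. Limsup at_top (\<lambda>t. ennreal (t powr (- real CARD('n) / r)) *
               (SUP x \<in> B. Lnorm r (Lambda_t Lam t) (\<lambda>v. norm (scaleC (F1 v x) (F2 v x) - P k v x) powr \<alpha>)))) \<longlonglongrightarrow> 0"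
    if B: "B \<in> BB" for B
  proof -
    obtain P1 :: "nat \<Rightarrow> real^'n \<Rightarrow> 'x \<Rightarrow> complex" where P1: "\<forall>k. trig_poly (P1 k)"
      and T1: "(\<lambda>k. Limsup at_top (\<lambda>t. ennreal (t powr (- real CARD('n) / p)) *
               (SUP x \<in> B. Lnorm p (Lambda_t Lam t) (\<lambda>v. norm (F1 v x - P1 k v x) powr \<alpha>)))) \<longlonglongrightarrow> 0"
      using h1 B by blast
    obtain P2 :: "nat \<Rightarrow> real^'n \<Rightarrow> 'x \<Rightarrow> 'y" where P2: "\<forall>k. trig_poly (P2 k)"
      and T2: "(\<lambda>k. Limsup at_top (\<lambda>t. ennreal (t powr (- real CARD('n) / q)) *
               (SUP x \<in> B. Lnorm q (Lambda_t Lam t) (\<lambda>v. norm (F2 v x - P2 k v x) powr \<alpha>)))) \<longlonglongrightarrow> 0"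
      using h2 B by blast
    have bB: "bounded B" using assms(11) B by blast
    show ?thesis
    proof (intro exI[of _ "\<lambda>k t x. scaleC (P1 k t x) (P2 k t x)"] conjI allI)
      fix k show "trig_poly (\<lambda>t x. scaleC (P1 k t x) (P2 k t x))"
        using P1 P2 by (intro trig_poly_mult) auto
    next
      show "(\<lambda>k. Limsup at_top (\<lambda>t. ennreal (t powr (- real CARD('n) / r)) *
               (SUP x \<in> B. Lnorm r (Lambda_t Lam t) (\<lambda>v. norm (scaleC (F1 v x) (F2 v x) - scaleC (P1 k v x) (P2 k v x)) powr \<alpha>)))) \<longlonglongrightarrow> 0"
        using core[OF assms(1) _ _ P1 P2 bB assms(6-9) assms(10) T1 T2] h1 h2 by blast
    qed
  qed
  show ?thesis unfolding e_Besicovitch_def using meas conv by simp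
qed


end
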